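(* The set of supports of the codewords of weight $6$ of the extended binary Hamming code of length $16$, viewed as $6$-element subsets of $\{1,\dots,16\}$, is a completely regular code in the Johnson graph $J(16,6)$ with covering radius $2$.
   Context: The Johnson graph $J(n,k)$ has as vertices the $k$-element subsets of $\{1,\dots,n\}$, adjacent iff they meet in $k-1$ elements. The extended binary Hamming code of length $16$ is the $[16,11,4]$ binary code obtained from the binary Hamming code of length $15$ by adding an overall parity bit. For a nonempty vertex set $C$ of a connected regular graph, $C_i$ is the set of vertices at distance exactly $i$ from $C$, the covering radius is the largest $i$ with $C_i\neq\emptyset$, and $C$ is completely regular if there are numbers $\gamma_i,\alpha_i,\beta_i$ such that every vertex of $C_i$ has exactly $\gamma_i$ neighbours in $C_{i-1}$, $\alpha_i$ in $C_i$, $\beta_i$ in $C_{i+1}$, for all $i$. *)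

theory Defs
  imports Main
begin

fun walk :: "('a \<Rightarrow> 'a \<Rightarrow> bool) \<Rightarrow> nat \<Rightarrow> 'a \<Rightarrow> 'a \<Rightarrow> bool" where
  "walk E 0 x y = (x = y)"
| "walk E (Suc n) x y = (\<exists>z. E x z \<and> walk E n z y)"

definition set_dist :: "('a \<Rightarrow> 'a \<Rightarrow> bool) \<Rightarrow> 'a set \<Rightarrow> 'a \<Rightarrow> nat" where
  "set_dist E C x = (LEAST n. \<exists>c\<in>C. walk E n x c)"

definition dist_layer :: "'a set \<Rightarrow> ('a \<Rightarrow> 'a \<Rightarrow> bool) \<Rightarrow> 'a set \<Rightarrow> nat \<Rightarrow> 'a set" where
  "dist_layer V E C i = {x \<in> V. set_dist E C x = i}"

definition covering_radius :: "'a set \<Rightarrow> ('a \<Rightarrow> 'a \<Rightarrow> bool) \<Rightarrow> 'a set \<Rightarrow> nat" where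
  "covering_radius V E C = (GREATEST i. dist_layer V E C i \<noteq> {})"

text \<open>Completely regular code. The neighbour count into C_{i-1} is taken to be over
  the empty set when i = 0 (condition Suc d = i).\<close>
definition completely_regular :: "'a set \<Rightarrow> ('a \<Rightarrow> 'a \<Rightarrow> bool) \<Rightarrow> 'a set \<Rightarrow> bool" where
  "completely_regular V E C \<longleftrightarrow> C \<noteq> {} \<and> C \<subseteq> V \<and>
     (\<exists>\<gamma> \<alpha> \<beta> :: nat \<Rightarrow> nat. \<forall>i. \<forall>x \<in> dist_layer V E C i.
        card {y \<in> V. E x y \<and> Suc (set_dist E C y) = i} = \<gamma> i \<and>
        card {y \<in> V. E x y \<and> set_dist E C y = i} = \<alpha> i \<and>
        card {y \<in> V. E x y \<and> set_dist E C y = Suc i} = \<beta> i)"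

definition johnson_vertices :: "nat \<Rightarrow> nat \<Rightarrow> nat set set" where
  "johnson_vertices n k = {A. A \<subseteq> {1..n} \<and> card A = k}"

definition johnson_adj :: "nat \<Rightarrow> nat \<Rightarrow> nat set \<Rightarrow> nat set \<Rightarrow> bool" where
  "johnson_adj n k A B \<longleftrightarrow> A \<in> johnson_vertices n k \<and> B \<in> johnson_vertices n k \<and>
     card (A \<inter> B) = k - 1"

text \<open>Binary words of length 15 / 16 are identified with their supports (subsets of
  {1..15} / {1..16}). The Hamming code of length 15 has parity-check matrix whose
  i-th column is the binary expansion of i (i = 1..15): a word lies in the code iff for
  every bit position j < 4 an even number of its support elements have bit j set.\<close>
definition hamming15 :: "nat set \<Rightarrow> bool" where
  "hamming15 S \<longleftrightarrow> S \<subseteq> {1..15} \<and> (\<forall>j<4. even (card {i \<in> S. odd (i div 2 ^ j)}))"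

text \<open>Extended code: coordinate 16 is the overall parity bit.\<close>
definition ext_hamming16 :: "nat set \<Rightarrow> bool" where
  "ext_hamming16 S \<longleftrightarrow> S \<subseteq> {1..16} \<and> hamming15 (S - {16}) \<and>
     (16 \<in> S \<longleftrightarrow> odd (card (S - {16})))"

definition weight6_supports :: "nat set set" where
  "weight6_supports = {S. ext_hamming16 S \<and> card S = 6}"

end

theory Submission
  imports Defs "HOL-Library.Z2" "HOL-Library.Function_Algebras"
begin


type_synonym vec = "nat \<Rightarrow> bit"

lemma bit_cases2: "(b::bit) = 0 \<or> b = 1" by (cases "b = 0") auto

lemma bit_self [simp]: "(b::bit) + b = 0"
  using bit_cases2[of b] by auto

lemma vec_self [simp]: "(x::vec) + x = 0"
  by (rule ext) simp

lemma vec_self2 [simp]: "(x::vec) + (x + y) = y"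
  by (simp add: add.assoc[symmetric])

lemma vec_minus [simp]: "- (x::vec) = x"
  by (metis add_right_cancel vec_self left_minus)

lemma vec_diff [simp]: "(x::vec) - y = x + y"
  by (metis diff_conv_add_uminus vec_minus)

lemma sum_apply: "(\<Sum>i\<in>A. f i) (k::nat) = (\<Sum>i\<in>A. (f i k :: bit))"
  by (induction A rule: infinite_finite_induct) auto

definition vv :: "nat \<Rightarrow> vec" where "vv i = (\<lambda>j. if j < 4 \<and> odd (i div 2^j) then 1 else 0)"
definition W :: "vec set" where "W = {w. \<forall>j\<ge>4. w j = 0}"
definition dec :: "vec \<Rightarrow> nat" where "dec w = (\<Sum>j<4. if w j = 1 then 2^j else 0)"
definition enc :: "vec \<Rightarrow> nat" where "enc w = (if dec w = 0 then 16 else dec w)"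

lemma lt4: "{..<4::nat} = {0,1,2,3}" by auto

lemma P16: "{1..16::nat} = {1,2,3,4,5,6,7,8,9,10,11,12,13,14,15,16}"
  by (simp add: atLeastAtMost_upt numeral_eq_Suc upt_rec)

lemma dec_vv: "i \<in> {1..16} \<Longrightarrow> dec (vv i) = i mod 16"
proof -
  assume "i \<in> {1..16}"
  then have "i \<in> {1,2,3,4,5,6,7,8,9,10,11,12,13,14,15,16}" by (simp only: P16)
  then show ?thesis by (auto simp: dec_def vv_def lt4)
qed

lemma vv_inj: "inj_on vv {1..16}"
proof (rule inj_onI)
  fix i k assume i: "i \<in> {1..16}" and k: "k \<in> {1..16}" and e: "vv i = vv k"
  then have "i mod 16 = k mod 16" using dec_vv by metis
  with i k show "i = k"
    by (cases "i = 16"; cases "k = 16") auto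
qed

lemma vv_W: "vv i \<in> W" by (simp add: W_def vv_def)

lemma enc_gen:
  fixes b0 b1 b2 b3 :: bit
  assumes "b0 \<in> {0,1}" "b1 \<in> {0,1}" "b2 \<in> {0,1}" "b3 \<in> {0,1}"
  defines "w \<equiv> (\<lambda>j. if j = 0 then b0 else if j = 1 then b1 else if j = 2 then b2 else if j = 3 then b3 else 0)"
  shows "enc w \<in> {1..16} \<and> vv (enc w) = w"
  using assms(1-4) unfolding w_def
  by (auto simp: enc_def dec_def lt4 vv_def fun_eq_iff)

lemma enc_props: assumes "w \<in> W" shows "enc w \<in> {1..16} \<and> vv (enc w) = w"
proof -
  have w4: "\<forall>j\<ge>4. w j = 0" using assms W_def by auto
  have e: "w = (\<lambda>j. if j = 0 then w 0 else if j = 1 then w 1 else if j = 2 then w 2 else if j = 3 then w 3 else 0)"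
  proof (rule ext)
    fix j show "w j = (if j = 0 then w 0 else if j = 1 then w 1 else if j = 2 then w 2 else if j = 3 then w 3 else 0)"
    proof (cases "j \<ge> 4")
      case False then have "j = 0 \<or> j = 1 \<or> j = 2 \<or> j = 3" by auto
      then show ?thesis by auto
    qed (use w4 in auto)
  qed
  have "enc (\<lambda>j. if j = 0 then w 0 else if j = 1 then w 1 else if j = 2 then w 2 else if j = 3 then w 3 else 0) \<in> {1..16} \<and> vv (enc (\<lambda>j. if j = 0 then w 0 else if j = 1 then w 1 else if j = 2 then w 2 else if j = 3 then w 3 else 0)) = (\<lambda>j. if j = 0 then w 0 else if j = 1 then w 1 else if j = 2 then w 2 else if j = 3 then w 3 else 0)"
    by (rule enc_gen) (use bit_cases2 in auto)
  then show ?thesis using e by metis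
qed

lemma vv_image: "vv ` {1..16} = W"
proof
  show "vv ` {1..16} \<subseteq> W" using vv_W by auto
  show "W \<subseteq> vv ` {1..16}" using enc_props by (metis image_eqI subsetI)
qed

lemma card_W: "card W = 16"
  using vv_image vv_inj card_image by fastforce

lemma W_add: "x \<in> W \<Longrightarrow> y \<in> W \<Longrightarrow> x + y \<in> W"
  by (simp add: W_def)

lemma W_0: "0 \<in> W" by (simp add: W_def)


lemma W_sum: "A \<subseteq> W \<Longrightarrow> \<Sum>A \<in> W"
  by (induction A rule: infinite_finite_induct) (auto simp: W_0 W_add)

lemma finite_W: "finite W" using card_W card.infinite by fastforce

lemma bit_of_nat: "(of_nat n :: bit) = 0 \<longleftrightarrow> even n"
  by (induction n) (auto simp: add_bit_eq_xor)

definition sig :: "nat set \<Rightarrow> vec" where "sig x = (\<Sum>i\<in>x. vv i)"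

lemma sig_apply: "sig x j = of_nat (card {i\<in>x. j < 4 \<and> odd (i div 2^j)})" if "finite x"
proof -
  have "sig x j = (\<Sum>i\<in>x. of_bool (j < 4 \<and> odd (i div 2^j)) :: bit)"
    by (simp add: sig_def sum_apply vv_def of_bool_def)
  also have "\<dots> = of_nat (card (x \<inter> {i. j < 4 \<and> odd (i div 2^j)}))"
    using that by simp
  finally show ?thesis by (simp add: Int_def conj_commute)
qed

lemma sig_zero_iff: "finite x \<Longrightarrow> sig x = 0 \<longleftrightarrow> (\<forall>j<4. even (card {i\<in>x. odd (i div 2^j)}))"
proof -
  assume f: "finite x"
  have "sig x = 0 \<longleftrightarrow> (\<forall>j. even (card {i\<in>x. j < 4 \<and> odd (i div 2^j)}))"
    by (simp add: fun_eq_iff sig_apply[OF f] bit_of_nat)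
  also have "\<dots> \<longleftrightarrow> (\<forall>j<4. even (card {i\<in>x. odd (i div 2^j)}))"
  proof
    assume "\<forall>j. even (card {i\<in>x. j < 4 \<and> odd (i div 2^j)})"
    then show "\<forall>j<4. even (card {i\<in>x. odd (i div 2^j)})"
    proof (intro allI impI)
      fix j :: nat assume j4: "j < 4" and h2: "\<forall>j. even (card {i\<in>x. j < 4 \<and> odd (i div 2^j)})"
      show "even (card {i\<in>x. odd (i div 2^j)})" using spec[OF h2, of j] j4 by simp
    qed
  next
    assume h: "\<forall>j<4. even (card {i\<in>x. odd (i div 2^j)})"
    show "\<forall>j. even (card {i\<in>x. j < 4 \<and> odd (i div 2^j)})"
    proof
      fix j show "even (card {i\<in>x. j < 4 \<and> odd (i div 2^j)})"
        using h by (cases "j < 4") auto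
    qed
  qed
  finally show ?thesis .
qed

lemma div16: "j < 4 \<Longrightarrow> even ((16::nat) div 2^j)"
proof -
  assume "j < 4" then have "j = 0 \<or> j = 1 \<or> j = 2 \<or> j = 3" by auto
  then show ?thesis by auto
qed

lemma weight6_iff: "x \<in> weight6_supports \<longleftrightarrow> x \<subseteq> {1..16} \<and> card x = 6 \<and> sig x = 0"
proof -
  have A: "hamming15 (x - {16}) \<longleftrightarrow> (\<forall>j<4. even (card {i\<in>x. odd (i div 2^j)}))"
    if "x \<subseteq> {1..16}" for x
  proof -
    have "{i\<in>x - {16}. odd (i div 2^j)} = {i\<in>x. odd (i div 2^j)}" if "j < 4" for j
      using div16[OF that] by auto
    moreover have "x - {16} \<subseteq> {1..15}" using that by auto
    ultimately show ?thesis unfolding hamming15_def by auto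
  qed
  have B: "(16 \<in> x \<longleftrightarrow> odd (card (x - {16})))" if "card x = 6" "finite x" for x :: "nat set"
    using that by (cases "16 \<in> x") (auto simp: card_Diff_singleton)
  show ?thesis
  proof (cases "x \<subseteq> {1..16} \<and> card x = 6")
    case True
    then have f: "finite x" using finite_subset by blast
    show ?thesis
    proof -
      have h1: "hamming15 (x-{16}) \<longleftrightarrow> sig x = 0" using A[of x] True sig_zero_iff[OF f] by blast
      have h2: "16 \<in> x \<longleftrightarrow> odd (card (x - {16}))" using B[of x] True f by blast
      show ?thesis unfolding weight6_supports_def ext_hamming16_def mem_Collect_eq using h1 h2 True by blast
    qed
  next
    case False
    then show ?thesis unfolding weight6_supports_def ext_hamming16_def mem_Collect_eq by blast
  qed
qed




definition nb :: "'a set \<Rightarrow> 'a \<Rightarrow> 'a \<Rightarrow> 'a set" where "nb x a b = insert b (x - {a})"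

lemma jv: "johnson_vertices 16 6 = {x. x \<subseteq> {1..16} \<and> card x = 6}"
  by (simp add: johnson_vertices_def)

lemma adj_iff: "johnson_adj 16 6 x y \<longleftrightarrow> x \<subseteq> {1..16} \<and> card x = 6 \<and> y \<subseteq> {1..16} \<and> card y = 6 \<and> card (x \<inter> y) = 5"
  by (simp add: johnson_adj_def johnson_vertices_def)

lemma nb_props:
  assumes fx: "finite x" and a: "a \<in> x" and b: "b \<notin> x"
  shows "card (nb x a b) = card x" "x \<inter> nb x a b = x - {a}" "nb x a b - x = {b}" "x - nb x a b = {a}"
proof -
  have "card (nb x a b) = Suc (card (x - {a}))" using fx a b by (simp add: nb_def)
  also have "\<dots> = card x" using fx a by (simp add: card_Diff_singleton) (metis Suc_pred card_gt_0_iff empty_iff)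
  finally show "card (nb x a b) = card x" .
  show "x \<inter> nb x a b = x - {a}" "nb x a b - x = {b}" "x - nb x a b = {a}" using a b by (auto simp: nb_def)
qed

lemma nb_inj:
  assumes "finite x" "a \<in> x" "b \<notin> x" "a' \<in> x" "b' \<notin> x" "nb x a b = nb x a' b'"
  shows "a = a' \<and> b = b'"
proof -
  have "{a} = {a'}" using nb_props(4)[of x a b] nb_props(4)[of x a' b'] assms by metis
  moreover have "{b} = {b'}" using nb_props(3)[of x a b] nb_props(3)[of x a' b'] assms by metis
  ultimately show ?thesis by simp
qed

lemma adj_nb:
  assumes x: "x \<subseteq> {1..16}" "card x = 6"
  shows "{y. johnson_adj 16 6 x y} = (\<lambda>p. nb x (fst p) (snd p)) ` (x \<times> ({1..16} - x))"
proof
  have fx: "finite x" using x(2) by (simp add: card_ge_0_finite)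
  show "{y. johnson_adj 16 6 x y} \<subseteq> (\<lambda>p. nb x (fst p) (snd p)) ` (x \<times> ({1..16} - x))"
  proof
    fix y assume "y \<in> {y. johnson_adj 16 6 x y}"
    then have y: "y \<subseteq> {1..16}" "card y = 6" "card (x \<inter> y) = 5" using adj_iff by auto
    have fy: "finite y" using y(2) by (simp add: card_ge_0_finite)
    have "card (x - y) = card x - card (x \<inter> y)" using fx by (simp add: card_Diff_subset_Int)
    then have "card (x - y) = 1" using y x by simp
    then obtain a where xa: "x - y = {a}" using card_1_singletonE by blast
    have "card (y - x) = card y - card (y \<inter> x)" using fy by (simp add: card_Diff_subset_Int)
    then have "card (y - x) = 1" using y x by (simp add: Int_commute)
    then obtain b where yb: "y - x = {b}" using card_1_singletonE by blast
    have "y = nb x a b" using xa yb unfolding nb_def by blast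
    moreover have "(a, b) \<in> x \<times> ({1..16} - x)" using xa yb y by auto
    ultimately show "y \<in> (\<lambda>p. nb x (fst p) (snd p)) ` (x \<times> ({1..16} - x))" by force
  qed
  show "(\<lambda>p. nb x (fst p) (snd p)) ` (x \<times> ({1..16} - x)) \<subseteq> {y. johnson_adj 16 6 x y}"
  proof
    fix y assume "y \<in> (\<lambda>p. nb x (fst p) (snd p)) ` (x \<times> ({1..16} - x))"
    then obtain a b where ab: "a \<in> x" "b \<in> {1..16}" "b \<notin> x" and y: "y = nb x a b" by force
    have c1: "card (nb x a b) = 6" using nb_props(1)[OF fx ab(1) ab(3)] x by simp
    have c2: "card (x \<inter> nb x a b) = 5" using nb_props(2)[OF fx ab(1) ab(3)] x fx ab(1)
      by (simp add: card_Diff_singleton)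
    have c3: "nb x a b \<subseteq> {1..16}" using x ab unfolding nb_def by blast
    have "johnson_adj 16 6 x (nb x a b)"
      unfolding adj_iff using x c1 c2 c3 by blast
    then show "y \<in> {y. johnson_adj 16 6 x y}" using y by simp
  qed
qed

lemma nb_inj_on:
  assumes x: "x \<subseteq> {1..16}" "card x = 6"
  shows "inj_on (\<lambda>p. nb x (fst p) (snd p)) (x \<times> ({1..16} - x))"
proof (rule inj_onI)
  have fx: "finite x" using x(2) by (simp add: card_ge_0_finite)
  fix p q assume p: "p \<in> x \<times> ({1..16} - x)" and q: "q \<in> x \<times> ({1..16} - x)"
    and e: "nb x (fst p) (snd p) = nb x (fst q) (snd q)"
  have "fst p = fst q \<and> snd p = snd q"
  proof -
    have "fst p \<in> x" "snd p \<notin> x" "fst q \<in> x" "snd q \<notin> x" using p q by (auto simp: mem_Times_iff)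
    then show ?thesis by (rule nb_inj[OF fx _ _ _ _ e])
  qed
  then show "p = q" by (simp add: prod_eq_iff)
qed

lemma card_nbrs:
  assumes x: "x \<subseteq> {1..16}" "card x = 6"
  shows "card {y \<in> johnson_vertices 16 6. johnson_adj 16 6 x y \<and> Q y}
       = card {p \<in> x \<times> ({1..16} - x). Q (nb x (fst p) (snd p))}"
proof -
  have "{y \<in> johnson_vertices 16 6. johnson_adj 16 6 x y \<and> Q y} = {y. johnson_adj 16 6 x y} \<inter> {y. Q y}"
    unfolding johnson_adj_def by blast
  also have "\<dots> = (\<lambda>p. nb x (fst p) (snd p)) ` {p \<in> x \<times> ({1..16} - x). Q (nb x (fst p) (snd p))}"
    unfolding adj_nb[OF x] by blast
  finally have e: "{y \<in> johnson_vertices 16 6. johnson_adj 16 6 x y \<and> Q y} = (\<lambda>p. nb x (fst p) (snd p)) ` {p \<in> x \<times> ({1..16} - x). Q (nb x (fst p) (snd p))}" .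
  show ?thesis unfolding e
    by (rule card_image) (rule inj_on_subset[OF nb_inj_on[OF x]], blast)
qed




definition Z :: "vec \<Rightarrow> bool" where "Z u \<longleftrightarrow> u = 0"
lemma Z0 [simp]: "Z 0" by (simp add: Z_def)
lemma veq: "((u::vec) = w) \<longleftrightarrow> Z (u + w)"
  by (simp add: Z_def) (metis add_right_cancel vec_self add_0)

definition closedt :: "vec set \<Rightarrow> vec \<Rightarrow> bool" where "closedt Y t \<longleftrightarrow> (\<forall>z\<in>Y. z + t \<in> Y)"

lemmas vsimp = veq add_ac vec_self vec_self2

definition clsV :: "vec set \<Rightarrow> nat" where
  "clsV Y = (if \<Sum>Y = 0 then 0 else if closedt Y (\<Sum>Y) then 2 else 1)"

lemma sum_nb: "finite X \<Longrightarrow> a \<in> X \<Longrightarrow> b \<notin> X \<Longrightarrow> \<Sum>(nb X a b) = \<Sum>X + a + (b::vec)"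
  by (simp add: nb_def sum_diff1 add_ac)

lemma ST2:
  fixes X :: "vec set"
  assumes X: "finite X" "card X = 6" and S: "S \<noteq> 0" and cl: "closedt X S" and a: "a \<in> X"
  shows "\<exists>p q. X = {a, a+S, p, p+S, q, q+S} \<and>
    \<not>Z(a+p) \<and> \<not>Z(a+p+S) \<and> \<not>Z(a+q) \<and> \<not>Z(a+q+S) \<and> \<not>Z(p+q) \<and> \<not>Z(p+q+S)"
proof -
  have zS: "\<not> Z S" using S by (simp add: Z_def)
  have aS: "a + S \<in> X" using cl a unfolding closedt_def by blast
  have d1: "a + S \<noteq> a" using zS by (simp add: vsimp)
  have "card (X - {a, a+S}) = 4" using X a aS d1 by (simp add: card_Diff_subset)
  then obtain p where p: "p \<in> X - {a, a+S}" by (metis card.empty all_not_in_conv zero_neq_numeral)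
  have pS: "p + S \<in> X" using cl p unfolding closedt_def by blast
  have d2: "p + S \<notin> {a, a + S, p}" using p zS by (auto simp: vsimp)
  have c4: "card {a, a+S, p, p+S} = 4" using d1 d2 p by (auto simp: card_insert_if)
  have "card (X - {a, a+S, p, p+S}) = 2" using X a aS d1 p pS d2 c4 by (simp add: card_Diff_subset)
  then obtain q where q: "q \<in> X - {a, a+S, p, p+S}" by (metis card.empty all_not_in_conv zero_neq_numeral)
  have qS: "q + S \<in> X" using cl q unfolding closedt_def by blast
  have d3: "q + S \<notin> {a, a + S, p, p+S, q}" using p q zS by (auto simp: vsimp)
  have sub: "{a, a+S, p, p+S, q, q+S} \<subseteq> X" using a aS p pS q qS by blast
  have "card {a, a+S, p, p+S, q, q+S} = 6" using d1 d2 d3 p q by (auto simp: card_insert_if)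
  then have eq: "X = {a, a+S, p, p+S, q, q+S}" using card_subset_eq[OF X(1) sub] X by simp
  have "X = {a, a+S, p, p+S, q, q+S} \<and>
    \<not>Z(a+p) \<and> \<not>Z(a+p+S) \<and> \<not>Z(a+q) \<and> \<not>Z(a+q+S) \<and> \<not>Z(p+q) \<and> \<not>Z(p+q+S)"
    using eq p q d2 d3 by (auto simp: vsimp)
  then show ?thesis by blast
qed


lemma clsV2: "clsV Y = 2 \<longleftrightarrow> \<not> Z (\<Sum>Y) \<and> closedt Y (\<Sum>Y)"
  by (simp add: clsV_def Z_def)
lemma clsV0: "clsV Y = 0 \<longleftrightarrow> Z (\<Sum>Y)"
  by (simp add: clsV_def Z_def)
lemma clsV_le: "clsV Y \<le> 2"
  by (simp add: clsV_def)

lemma V2a: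
  fixes a p q S b :: vec
  assumes nz: "\<not>Z S" "\<not>Z(a+p)" "\<not>Z(a+p+S)" "\<not>Z(a+q)" "\<not>Z(a+q+S)" "\<not>Z(p+q)" "\<not>Z(p+q+S)"
    and b: "b \<notin> {a, a+S, p, p+S, q, q+S}"
  shows "(\<not>Z(S+a+b) \<and> closedt {b, a+S, p, p+S, q, q+S} (S+a+b)) \<longleftrightarrow> (b = a+p+q \<or> b = a+p+q+S)"
  using nz b unfolding closedt_def by (auto simp: vsimp)

lemma V2cnt:
  fixes X :: "vec set"
  assumes X: "X \<subseteq> W" "card X = 6" and S: "\<Sum>X \<noteq> 0" and cl: "closedt X (\<Sum>X)" and a: "a \<in> X"
  shows "card {b \<in> W - X. clsV (nb X a b) = 2} = 2" "card {b \<in> W - X. clsV (nb X a b) = 0} = 0"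
proof -
  define S where "S = \<Sum>X"
  have fX: "finite X" using X(2) by (simp add: card_ge_0_finite)
  have zS: "\<not> Z S" using S by (simp add: Z_def S_def)
  obtain p q where pq: "X = {a, a+S, p, p+S, q, q+S}" and
    nz: "\<not>Z(a+p)" "\<not>Z(a+p+S)" "\<not>Z(a+q)" "\<not>Z(a+q+S)" "\<not>Z(p+q)" "\<not>Z(p+q+S)"
    using ST2[OF fX X(2) S cl a] unfolding S_def by blast
  have inW: "a \<in> W" "p \<in> W" "q \<in> W" "S \<in> W" using X pq W_sum[of X] unfolding S_def by auto
  have nbe: "nb X a b = {b, a+S, p, p+S, q, q+S}" for b
    using pq nz zS unfolding nb_def by (auto simp: vsimp)
  have sn: "\<Sum>(nb X a b) = S + a + b" if "b \<notin> X" for b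
    using sum_nb[OF fX a that] S_def by simp
  have sn': "\<Sum>{b, a+S, p, p+S, q, q+S} = S + a + b" if "b \<notin> X" for b
    using sn[OF that] by (simp only: nbe)
  have c: "clsV (nb X a b) = 2 \<longleftrightarrow> (\<not>Z(S+a+b) \<and> closedt {b, a+S, p, p+S, q, q+S} (S+a+b))" if "b \<notin> X" for b
    by (simp only: nbe clsV2 sn'[OF that])
  have "{b \<in> W - X. clsV (nb X a b) = 2} = {a+p+q, a+p+q+S}"
  proof (intro equalityI subsetI)
    fix b assume "b \<in> {b \<in> W - X. clsV (nb X a b) = 2}"
    then have b: "b \<notin> X" "clsV (nb X a b) = 2" by auto
    then show "b \<in> {a+p+q, a+p+q+S}"
      using V2a[OF zS nz, of b] pq c[OF b(1)] b by auto
  next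
    fix b assume "b \<in> {a+p+q, a+p+q+S}"
    then have bb: "b = a+p+q \<or> b = a+p+q+S" by auto
    have bW: "b \<in> W" using bb inW by (auto intro!: W_add)
    have "a+p+q \<notin> X" "a+p+q+S \<notin> X" unfolding pq using nz zS by (simp_all add: vsimp)
    then have bX: "b \<notin> X" using bb by auto
    have "clsV (nb X a b) = 2"
      using V2a[OF zS nz, of b] bb bX pq c[OF bX] by auto
    then show "b \<in> {b \<in> W - X. clsV (nb X a b) = 2}" using bW bX by auto
  qed
  moreover have "a+p+q \<noteq> a+p+q+S" using zS by (simp add: vsimp)
  ultimately show "card {b \<in> W - X. clsV (nb X a b) = 2} = 2" by simp
  have "{b \<in> W - X. clsV (nb X a b) = 0} = {}"
  proof (intro equalityI subsetI)
    fix b assume "b \<in> {b \<in> W - X. clsV (nb X a b) = 0}"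
    then have b: "b \<notin> X" "clsV (nb X a b) = 0" by auto
    have "Z (S + a + b)" using b sn clsV0 by simp
    then have "b = a + S" by (simp add: vsimp)
    then show "b \<in> {}" using b pq by simp
  qed auto
  then show "card {b \<in> W - X. clsV (nb X a b) = 0} = 0" by (metis card.empty)
qed




lemma cardP: "card {i\<in>{1..16::nat}. P i} = length (filter P [1..<17])"
proof -
  have "{i\<in>{1..16::nat}. P i} = set (filter P [1..<17])" by auto
  moreover have "card (set (filter P [1..<17])) = length (filter P [1..<17::nat])"
    by (rule distinct_card) simp
  ultimately show ?thesis by simp
qed

lemma upt17: "[1..<17] = [1,2,3,4,5,6,7,8,9,10,11,12,13,14,15,16::nat]"
  by (simp add: numeral_eq_Suc upt_rec)

lemma j4cases: "(j::nat) < 4 \<Longrightarrow> j = 0 \<or> j = 1 \<or> j = 2 \<or> j = 3" by auto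

lemma Wj_img: "j < 4 \<Longrightarrow> {w\<in>W. w j = 0} = vv ` {i\<in>{1..16}. even (i div 2^j)}"
proof -
  assume j: "j < 4"
  show ?thesis
  proof (intro equalityI subsetI)
    fix w assume "w \<in> {w\<in>W. w j = 0}"
    then have "w \<in> vv ` {1..16}" "w j = 0" using vv_image by auto
    then obtain i where i: "i \<in> {1..16}" "w = vv i" "w j = 0" by blast
    then have "even (i div 2^j)" using j by (auto simp: vv_def split: if_splits)
    then show "w \<in> vv ` {i\<in>{1..16}. even (i div 2^j)}" using i by blast
  next
    fix w assume "w \<in> vv ` {i\<in>{1..16}. even (i div 2^j)}"
    then show "w \<in> {w\<in>W. w j = 0}" using j vv_W by (auto simp: vv_def)
  qed
qed

lemma Wj_facts: assumes "j < 4" shows "card {w\<in>W. w j = 0} = 8" "\<Sum>{w\<in>W. w j = 0} = 0"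
proof -
  let ?A = "{i\<in>{1..16::nat}. even (i div 2^j)}"
  have inj: "inj_on vv ?A" using vv_inj by (rule inj_on_subset) auto
  have "card ?A = 8" using j4cases[OF assms] by (elim disjE) (simp_all only: cardP upt17, simp_all)
  then show "card {w\<in>W. w j = 0} = 8" unfolding Wj_img[OF assms] card_image[OF inj] .
  have fA: "finite ?A" by simp
  have "sig ?A = 0"
    unfolding sig_zero_iff[OF fA]
  proof (intro allI impI)
    fix k :: nat assume k: "k < 4"
    have e: "{i \<in> ?A. odd (i div 2^k)} = {i\<in>{1..16::nat}. even (i div 2^j) \<and> odd (i div 2^k)}" by auto
    show "even (card {i \<in> ?A. odd (i div 2^k)})"
      unfolding e using j4cases[OF assms] j4cases[OF k]
      by (elim disjE) (simp_all only: cardP upt17, simp_all)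
  qed
  then show "\<Sum>{w\<in>W. w j = 0} = 0" unfolding Wj_img[OF assms] sum.reindex[OF inj] sig_def by simp
qed


lemma vec_fun_add: "(f::vec) + g = (\<lambda>k. f k + g k)" by (simp add: plus_fun_def)

lemma bit4: "(a::bit) + b = c + d \<Longrightarrow> a + c = b + d"
  using bit_cases2[of a] bit_cases2[of b] bit_cases2[of c] bit_cases2[of d] by auto

lemma NOPAIR:
  fixes X :: "vec set"
  assumes X: "X \<subseteq> W" "card X = 6" and S: "\<Sum>X \<noteq> 0" and np: "\<forall>z\<in>X. z + \<Sum>X \<notin> X"
  shows False
proof -
  define S where "S = \<Sum>X"
  have fX: "finite X" using X(2) by (simp add: card_ge_0_finite)
  have SW: "S \<in> W" using W_sum[OF X(1)] S_def by simp
  obtain j where j1: "S j \<noteq> 0" using S S_def by (metis ext zero_fun_def)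
  then have Sj: "S j = 1" using bit_cases2 by blast
  have j4: "j < 4" proof (rule ccontr)
    assume "\<not> j < 4" then have "S j = 0" using SW unfolding W_def by auto
    then show False using j1 by simp
  qed
  define pi where "pi w = w + (\<lambda>k. w j * S k)" for w :: vec
  have pij: "pi w j = 0" for w by (simp add: pi_def Sj vec_fun_add)
  have piW: "pi w \<in> W" if "w \<in> W" for w using that SW by (simp add: pi_def W_def vec_fun_add)
  have inj: "inj_on pi X"
  proof (rule inj_onI)
    fix z z' assume z: "z \<in> X" and z': "z' \<in> X" and e: "pi z = pi z'"
    have e2: "z + z' = (\<lambda>k. (z j + z' j) * S k)"
    proof (rule ext)
      fix k
      have "z k + z j * S k = z' k + z' j * S k" using e unfolding pi_def vec_fun_add by metis
      then show "(z + z') k = (z j + z' j) * S k"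
        unfolding vec_fun_add distrib_right by (rule bit4)
    qed
    show "z = z'"
    proof (cases "z j + z' j = 0")
      case True
      then have "z + z' = 0" using e2 by (simp add: zero_fun_def)
      then show ?thesis by (metis add_right_cancel vec_self)
    next
      case False
      then have "z j + z' j = 1" using bit_cases2 by blast
      then have "(\<lambda>k. (z j + z' j) * S k) = S" by (simp only: mult_1_left)
      then have "z + z' = S" using e2 by simp
      then have "z' = z + S" by (metis vec_self2)
      then have "z + S \<in> X" using z' by simp
      moreover have "z + S \<notin> X" using np z unfolding S_def by blast
      ultimately show ?thesis by contradiction
    qed
  qed
  have sumpi: "(\<Sum>z\<in>X. pi z) = 0"
  proof -
    have "(\<Sum>z\<in>X. pi z) = S + (\<Sum>z\<in>X. (\<lambda>k. z j * S k))"
      unfolding pi_def sum.distrib S_def by simp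
    also have "(\<Sum>z\<in>X. (\<lambda>k. z j * S k)) = (\<lambda>k. (\<Sum>z\<in>X. z j) * S k)"
      by (rule ext) (simp only: sum_apply sum_distrib_right)
    also have "(\<Sum>z\<in>X. z j) = S j" unfolding S_def by (simp add: sum_apply)
    finally show ?thesis using Sj by (simp add: zero_fun_def)
  qed
  let ?Wj = "{w\<in>W. w j = 0}"
  have fWj: "finite ?Wj" using finite_W by simp
  have sub: "pi ` X \<subseteq> ?Wj" using piW pij X(1) by auto
  have cpX: "card (pi ` X) = 6" using card_image[OF inj] X(2) by simp
  have spX: "\<Sum>(pi ` X) = 0" using sum.reindex[OF inj, of id] sumpi by simp
  define D where "D = ?Wj - pi ` X"
  have cD: "card D = 2" unfolding D_def using card_Diff_subset[OF finite_subset[OF sub fWj] sub] Wj_facts(1)[OF j4] cpX by simp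
  have sD: "\<Sum>D = 0" unfolding D_def using sum_diff[OF fWj sub, of id] Wj_facts(2)[OF j4] spX by simp
  obtain d1 d2 where "D = {d1, d2}" "d1 \<noteq> d2" using cD by (meson card_2_iff)
  then have "d1 + d2 = 0" using sD by simp
  then show False using \<open>d1 \<noteq> d2\<close> by (metis add_right_cancel vec_self)
qed




lemma card4: "card A = 4 \<Longrightarrow> \<exists>a b c d. A = {a,b,c,d} \<and> a\<noteq>b \<and> a\<noteq>c \<and> a\<noteq>d \<and> b\<noteq>c \<and> b\<noteq>d \<and> c\<noteq>d"
  by (auto simp: card_Suc_eq numeral_eq_Suc)

lemma ST1:
  fixes X :: "vec set"
  assumes X: "X \<subseteq> W" "card X = 6" and S0: "\<Sum>X \<noteq> 0" and ncl: "\<not> closedt X (\<Sum>X)"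
  defines "S \<equiv> \<Sum>X"
  shows "\<exists>u R r1 r2 r3. X = insert u (insert (u+S) R) \<and> R = {r1,r2,r3,r1+r2+r3} \<and> u \<notin> R \<and> u+S \<notin> R
     \<and> (\<forall>z\<in>R. z + S \<notin> X) \<and> card R = 4 \<and>
     \<not>Z S \<and> \<not>Z(u+r1) \<and> \<not>Z(u+r2) \<and> \<not>Z(u+r3) \<and> \<not>Z(u+r1+r2+r3) \<and>
     \<not>Z(S+u+r1) \<and> \<not>Z(S+u+r2) \<and> \<not>Z(S+u+r3) \<and> \<not>Z(S+u+r1+r2+r3) \<and>
     \<not>Z(r1+r2) \<and> \<not>Z(r1+r3) \<and> \<not>Z(r2+r3) \<and> \<not>Z(S+r1+r2) \<and> \<not>Z(S+r1+r3) \<and> \<not>Z(S+r2+r3)"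
proof -
  have fX: "finite X" using X(2) by (simp add: card_ge_0_finite)
  have zS: "\<not> Z S" using S0 by (simp add: Z_def S_def)
  have SS: "S \<noteq> 0" using S0 S_def by simp
  define Q where "Q = {z\<in>X. z + S \<in> X}"
  have QS: "z + S \<in> Q" if "z \<in> Q" for z using that unfolding Q_def by (simp add: add.assoc)
  have "Q \<noteq> {}"
  proof
    assume "Q = {}"
    then have "\<forall>z\<in>X. z + \<Sum>X \<notin> X" unfolding Q_def S_def by blast
    then show False using NOPAIR[OF X S0] by blast
  qed
  then obtain u where u: "u \<in> Q" by blast
  have uS: "u + S \<in> Q" using QS[OF u] .
  have d1: "u \<noteq> u + S" using SS by (metis add_cancel_left_right)
  have QX: "Q \<subseteq> X" unfolding Q_def by blast
  obtain c where c: "c \<in> X" "c + S \<notin> X" using ncl unfolding closedt_def S_def by blast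
  have cQ: "c \<notin> Q" using c unfolding Q_def by blast
  show ?thesis
  proof (cases "Q - {u, u+S} = {}")
    case False
    then obtain p where p: "p \<in> Q" "p \<noteq> u" "p \<noteq> u+S" by blast
    have pS: "p + S \<in> Q" using QS[OF p(1)] .
    have d2: "p + S \<noteq> u" "p + S \<noteq> u + S" "p + S \<noteq> p"
      using p SS by (metis add_cancel_left_right vec_self2 add.assoc add.commute)+
    define A where "A = {u, u+S, p, p+S}"
    have AX: "A \<subseteq> X" using u uS p pS QX unfolding A_def by blast
    have sA: "\<Sum>A = 0" unfolding A_def using d1 d2 p by (simp add: add_ac)
    have cA: "card A = 4" unfolding A_def using d1 d2 p by (simp add: card_insert_if)
    have cD: "card (X - A) = 2" using card_Diff_subset[OF finite_subset[OF AX fX] AX] cA X(2) by simp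
    have cXA: "c \<in> X - A" using c cQ u uS p pS unfolding A_def by blast
    obtain d1' d2' where D: "X - A = {d1', d2'}" "d1' \<noteq> d2'" using cD by (meson card_2_iff)
    have "S = \<Sum>A + \<Sum>(X - A)" unfolding S_def using sum.subset_diff[OF AX fX, of id] by simp
    then have "S = d1' + d2'" using sA D by simp
    then have e1: "d1' + S = d2'" "d2' + S = d1'" by (metis vec_self2 add.commute add.assoc)+
    have "c = d1' \<or> c = d2'" using cXA D by blast
    then have "c + S \<in> X - A" using e1 D by (metis insertI1 insertI2 singletonI)
    then have "c + S \<in> X" by blast
    then show ?thesis using c by blast
  next
    case True
    then have Qe: "Q = {u, u+S}" using u uS by blast
    define R where "R = X - {u, u+S}"
    have XR: "X = insert u (insert (u+S) R)" unfolding R_def using u uS QX by blast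
    have uR: "u \<notin> R" "u + S \<notin> R" unfolding R_def by auto
    have Rnp: "\<forall>z\<in>R. z + S \<notin> X" unfolding R_def using Qe unfolding Q_def by blast
    have c2: "card {u, u+S} = 2" using d1 by simp
    have s2: "{u, u+S} \<subseteq> X" using u uS QX by blast
    have cR: "card R = 4" unfolding R_def using card_Diff_subset[OF _ s2] c2 X(2) by simp
    obtain r1 r2 r3 r4 where R4: "R = {r1,r2,r3,r4}" and dr: "r1\<noteq>r2" "r1\<noteq>r3" "r1\<noteq>r4" "r2\<noteq>r3" "r2\<noteq>r4" "r3\<noteq>r4"
      using card4[OF cR] by blast
    have fR: "finite R" unfolding R_def using fX by simp
    have "\<Sum>X = u + ((u + S) + \<Sum>R)" unfolding XR using uR d1 fR by simp
    then have "S = u + (u + S) + \<Sum>R" unfolding S_def by (simp add: add.assoc)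
    then have "\<Sum>R = 0" by (metis vec_self2 add.assoc add_0_right)
    then have "r1 + (r2 + (r3 + r4)) = 0" unfolding R4 using dr by (simp add: add.assoc)
    then have r4: "r4 = r1 + r2 + r3" by (metis vec_self2 add.assoc add.commute add_0_right)
    have np: "r1 + S \<notin> X" "r2 + S \<notin> X" "r3 + S \<notin> X" "r4 + S \<notin> X" using Rnp R4 by auto
    have "X = insert u (insert (u+S) R) \<and> R = {r1,r2,r3,r1+r2+r3} \<and> u \<notin> R \<and> u+S \<notin> R
     \<and> (\<forall>z\<in>R. z + S \<notin> X) \<and> card R = 4 \<and>
     \<not>Z S \<and> \<not>Z(u+r1) \<and> \<not>Z(u+r2) \<and> \<not>Z(u+r3) \<and> \<not>Z(u+r1+r2+r3) \<and>
     \<not>Z(S+u+r1) \<and> \<not>Z(S+u+r2) \<and> \<not>Z(S+u+r3) \<and> \<not>Z(S+u+r1+r2+r3) \<and>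
     \<not>Z(r1+r2) \<and> \<not>Z(r1+r3) \<and> \<not>Z(r2+r3) \<and> \<not>Z(S+r1+r2) \<and> \<not>Z(S+r1+r3) \<and> \<not>Z(S+r2+r3)"
    proof (intro conjI)
      show "X = insert u (insert (u+S) R)" "R = {r1,r2,r3,r1+r2+r3}" "u \<notin> R" "u+S \<notin> R"
        "\<forall>z\<in>R. z + S \<notin> X" "card R = 4" "\<not> Z S" using XR R4 r4 uR Rnp cR zS by auto
      have facts: "u \<notin> {r1,r2,r3,r1+r2+r3}" "u + S \<notin> {r1,r2,r3,r1+r2+r3}" "r1\<noteq>r2" "r1\<noteq>r3" "r2\<noteq>r3"
        "r1 + S \<notin> {r1,r2,r3,r1+r2+r3}" "r2 + S \<notin> {r1,r2,r3,r1+r2+r3}" "r3 + S \<notin> {r1,r2,r3,r1+r2+r3}"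
        using uR R4 r4 dr np XR by auto
      show "\<not>Z(u+r1)" "\<not>Z(u+r2)" "\<not>Z(u+r3)" "\<not>Z(u+r1+r2+r3)"
        "\<not>Z(S+u+r1)" "\<not>Z(S+u+r2)" "\<not>Z(S+u+r3)" "\<not>Z(S+u+r1+r2+r3)"
        "\<not>Z(r1+r2)" "\<not>Z(r1+r3)" "\<not>Z(r2+r3)" "\<not>Z(S+r1+r2)" "\<not>Z(S+r1+r3)" "\<not>Z(S+r2+r3)"
        using facts by (simp_all add: vsimp)
    qed
    then show ?thesis by blast
  qed
qed




lemma V1u:
  fixes u r1 r2 r3 S b :: vec
  assumes nz: "\<not>Z S" "\<not>Z(u+r1)" "\<not>Z(u+r2)" "\<not>Z(u+r3)" "\<not>Z(u+r1+r2+r3)"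
     "\<not>Z(S+u+r1)" "\<not>Z(S+u+r2)" "\<not>Z(S+u+r3)" "\<not>Z(S+u+r1+r2+r3)"
     "\<not>Z(r1+r2)" "\<not>Z(r1+r3)" "\<not>Z(r2+r3)" "\<not>Z(S+r1+r2)" "\<not>Z(S+r1+r3)" "\<not>Z(S+r2+r3)"
    and b: "b \<notin> {u, u+S, r1, r2, r3, r1+r2+r3}"
  shows "(\<not>Z(S+u+b) \<and> closedt {b, u+S, r1, r2, r3, r1+r2+r3} (S+u+b)) \<longleftrightarrow>
     (b = u+S+r1+r2 \<or> b = u+S+r1+r3 \<or> b = u+S+r2+r3)"
  using nz b unfolding closedt_def by (auto simp: vsimp)

lemma V1u':
  fixes u r1 r2 r3 S b :: vec
  assumes nz: "\<not>Z S" "\<not>Z(u+r1)" "\<not>Z(u+r2)" "\<not>Z(u+r3)" "\<not>Z(u+r1+r2+r3)"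
     "\<not>Z(S+u+r1)" "\<not>Z(S+u+r2)" "\<not>Z(S+u+r3)" "\<not>Z(S+u+r1+r2+r3)"
     "\<not>Z(r1+r2)" "\<not>Z(r1+r3)" "\<not>Z(r2+r3)" "\<not>Z(S+r1+r2)" "\<not>Z(S+r1+r3)" "\<not>Z(S+r2+r3)"
    and b: "b \<notin> {u, u+S, r1, r2, r3, r1+r2+r3}"
  shows "(\<not>Z(S+(u+S)+b) \<and> closedt {b, u, r1, r2, r3, r1+r2+r3} (S+(u+S)+b)) \<longleftrightarrow>
     (b = u+r1+r2 \<or> b = u+r1+r3 \<or> b = u+r2+r3)"
  using nz b unfolding closedt_def by (auto simp: vsimp)

lemma V1r:
  fixes u S a b :: vec
  assumes nz: "\<not>Z S" "\<not> Z(S+a+b)" and ab: "a \<noteq> u" "a \<noteq> u+S" "b \<noteq> u" "b \<noteq> u+S" "a \<noteq> b"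
    and np: "\<forall>z\<in>R'. z + S \<notin> R'"
  shows "\<not> closedt (insert b (insert u (insert (u+S) R'))) (S+a+b)"
proof
  assume cl: "closedt (insert b (insert u (insert (u+S) R'))) (S+a+b)"
  have h1: "u + (S+a+b) \<in> insert b (insert u (insert (u+S) R'))" using cl unfolding closedt_def by blast
  have h2: "u + S + (S+a+b) \<in> insert b (insert u (insert (u+S) R'))" using cl unfolding closedt_def by blast
  have z: "\<not>Z(S+a+u)" "\<not>Z(a+b)" "\<not>Z(a+u)" "\<not>Z(b+u)" "\<not>Z(S+b+u)" using ab by (simp_all add: vsimp)
  have m1: "u + (S+a+b) \<in> R'" using h1 nz z by (simp add: vsimp)
  have m2: "u + S + (S+a+b) \<in> R'" using h2 nz z by (simp add: vsimp)
  have "u + (S+a+b) + S \<notin> R'" using np m1 by blast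
  then show False using m2 by (simp add: add_ac)
qed


lemma filt_eq: "(\<And>b. b \<in> A \<Longrightarrow> P b \<longleftrightarrow> b \<in> E) \<Longrightarrow> E \<subseteq> A \<Longrightarrow> {b\<in>A. P b} = E"
  by blast

lemma V1cnt:
  fixes X :: "vec set"
  assumes X: "X \<subseteq> W" "card X = 6" and S0: "\<Sum>X \<noteq> 0" and ncl: "\<not> closedt X (\<Sum>X)"
  shows "(\<Sum>a\<in>X. card {b\<in>W-X. clsV (nb X a b) = 2}) = 6"
        "(\<Sum>a\<in>X. card {b\<in>W-X. clsV (nb X a b) = 0}) = 4"
proof -
  define S where "S = \<Sum>X"
  obtain u R r1 r2 r3 where XR: "X = insert u (insert (u+S) R)" and R4: "R = {r1,r2,r3,r1+r2+r3}"
    and uR: "u \<notin> R" "u+S \<notin> R" and Rnp: "\<forall>z\<in>R. z + S \<notin> X" and cR: "card R = 4"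
    and nz: "\<not>Z S" "\<not>Z(u+r1)" "\<not>Z(u+r2)" "\<not>Z(u+r3)" "\<not>Z(u+r1+r2+r3)"
     "\<not>Z(S+u+r1)" "\<not>Z(S+u+r2)" "\<not>Z(S+u+r3)" "\<not>Z(S+u+r1+r2+r3)"
     "\<not>Z(r1+r2)" "\<not>Z(r1+r3)" "\<not>Z(r2+r3)" "\<not>Z(S+r1+r2)" "\<not>Z(S+r1+r3)" "\<not>Z(S+r2+r3)"
    using ST1[OF X S0 ncl, folded S_def] by blast
  have fX: "finite X" using X(2) by (simp add: card_ge_0_finite)
  have fR: "finite R" using R4 by simp
  have d1: "u \<noteq> u + S" using nz(1) by (simp add: vsimp)
  have SW: "S \<in> W" using W_sum[OF X(1)] S_def by simp
  have inW: "u \<in> W" "r1 \<in> W" "r2 \<in> W" "r3 \<in> W" using X(1) XR R4 by auto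
  have sn: "\<Sum>(nb X a b) = S + a + b" if "a \<in> X" "b \<notin> X" for a b
    using sum_nb[OF fX that] S_def by simp
  have Xe: "X = {u, u+S, r1, r2, r3, r1+r2+r3}" using XR R4 by simp
  have dec: "(\<Sum>a\<in>X. f a) = f u + (f (u+S) + (\<Sum>a\<in>R. f a))" for f :: "vec \<Rightarrow> nat"
    unfolding XR using uR d1 fR by simp
  have uX: "u \<in> X" "u + S \<in> X" using XR by auto
  have nbu: "nb X u b = {b, u+S, r1, r2, r3, r1+r2+r3}" for b
    unfolding nb_def XR R4[symmetric] using uR d1 by auto
  have nbu': "nb X (u+S) b = {b, u, r1, r2, r3, r1+r2+r3}" for b
    unfolding nb_def XR R4[symmetric] using uR d1 by auto
  have f2u: "card {b\<in>W-X. clsV (nb X u b) = 2} = 3"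
  proof -
    have "{b\<in>W-X. clsV (nb X u b) = 2} = {u+S+r1+r2, u+S+r1+r3, u+S+r2+r3}"
    proof (rule filt_eq)
      fix b assume b: "b \<in> W - X"
      have sb: "\<Sum>{b, u+S, r1, r2, r3, r1+r2+r3} = S + u + b" using sn[OF uX(1), of b] b nbu[of b] by simp
      show "clsV (nb X u b) = 2 \<longleftrightarrow> b \<in> {u+S+r1+r2, u+S+r1+r3, u+S+r2+r3}"
        unfolding nbu clsV2 sb using V1u[OF nz, of b] b Xe by auto
    next
      have "u+S+r1+r2 \<notin> X" "u+S+r1+r3 \<notin> X" "u+S+r2+r3 \<notin> X" unfolding Xe using nz by (simp_all add: vsimp)
      moreover have "u+S+r1+r2 \<in> W" "u+S+r1+r3 \<in> W" "u+S+r2+r3 \<in> W" using inW SW by (simp_all add: W_add)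
      ultimately show "{u+S+r1+r2, u+S+r1+r3, u+S+r2+r3} \<subseteq> W - X" by auto
    qed
    moreover have "card {u+S+r1+r2, u+S+r1+r3, u+S+r2+r3} = 3" using nz by (simp add: vsimp card_insert_if)
    ultimately show ?thesis by simp
  qed
  have f2u': "card {b\<in>W-X. clsV (nb X (u+S) b) = 2} = 3"
  proof -
    have "{b\<in>W-X. clsV (nb X (u+S) b) = 2} = {u+r1+r2, u+r1+r3, u+r2+r3}"
    proof (rule filt_eq)
      fix b assume b: "b \<in> W - X"
      have sb: "\<Sum>{b, u, r1, r2, r3, r1+r2+r3} = S + (u+S) + b" using sn[OF uX(2), of b] b nbu'[of b] by simp
      show "clsV (nb X (u+S) b) = 2 \<longleftrightarrow> b \<in> {u+r1+r2, u+r1+r3, u+r2+r3}"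
        unfolding nbu' clsV2 sb using V1u'[OF nz, of b] b Xe by auto
    next
      have "u+r1+r2 \<notin> X" "u+r1+r3 \<notin> X" "u+r2+r3 \<notin> X" unfolding Xe using nz by (simp_all add: vsimp)
      moreover have "u+r1+r2 \<in> W" "u+r1+r3 \<in> W" "u+r2+r3 \<in> W" using inW SW by (simp_all add: W_add)
      ultimately show "{u+r1+r2, u+r1+r3, u+r2+r3} \<subseteq> W - X" by auto
    qed
    moreover have "card {u+r1+r2, u+r1+r3, u+r2+r3} = 3" using nz by (simp add: vsimp card_insert_if)
    ultimately show ?thesis by simp
  qed
  have f0u: "card {b\<in>W-X. clsV (nb X a b) = 0} = 0" if "a \<in> {u, u+S}" for a
  proof -
    have "{b\<in>W-X. clsV (nb X a b) = 0} = {}"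
    proof (rule filt_eq)
      fix b assume b: "b \<in> W - X"
      have aX: "a \<in> X" using that uX by auto
      have bX: "b \<notin> X" using b by simp
      have "Z (S + a + b) \<Longrightarrow> b = a + S" by (simp add: vsimp)
      moreover have "a + S \<in> X" using that uX by (auto simp: add.assoc)
      ultimately show "clsV (nb X a b) = 0 \<longleftrightarrow> b \<in> {}" unfolding clsV0 sn[OF aX bX] using b by auto
    qed auto
    then show ?thesis by (metis card.empty)
  qed
  have f2r: "card {b\<in>W-X. clsV (nb X a b) = 2} = 0" if a: "a \<in> R" for a
  proof -
    have aX: "a \<in> X" using a XR by auto
    have "{b\<in>W-X. clsV (nb X a b) = 2} = {}"
    proof (rule filt_eq)
      fix b assume b: "b \<in> W - X"
      have bX: "b \<notin> X" using b by simp
      have e: "nb X a b = insert b (insert u (insert (u+S) (R - {a})))"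
        unfolding nb_def XR using a uR by auto
      have np: "\<forall>z\<in>R - {a}. z + S \<notin> R - {a}" using Rnp XR by blast
      have ab: "a \<noteq> u" "a \<noteq> u+S" "b \<noteq> u" "b \<noteq> u+S" "a \<noteq> b" using a uR b uX aX by auto
      show "clsV (nb X a b) = 2 \<longleftrightarrow> b \<in> {}"
        unfolding clsV2 sn[OF aX bX] using V1r[OF nz(1) _ ab np] e by auto
    qed auto
    then show ?thesis by (metis card.empty)
  qed
  have f0r: "card {b\<in>W-X. clsV (nb X a b) = 0} = 1" if a: "a \<in> R" for a
  proof -
    have aX: "a \<in> X" using a XR by auto
    have aSW: "a + S \<in> W" using aX X(1) SW by (auto intro: W_add)
    have aSX: "a + S \<notin> X" using Rnp a by blast
    have "{b\<in>W-X. clsV (nb X a b) = 0} = {a + S}"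
    proof (rule filt_eq)
      fix b assume b: "b \<in> W - X"
      have bX: "b \<notin> X" using b by simp
      have "Z (S + a + b) \<longleftrightarrow> b = a + S" by (simp add: vsimp)
      then show "clsV (nb X a b) = 0 \<longleftrightarrow> b \<in> {a + S}" unfolding clsV0 sn[OF aX bX] using b by auto
    qed (use aSW aSX in auto)
    then show ?thesis by simp
  qed
  show "(\<Sum>a\<in>X. card {b\<in>W-X. clsV (nb X a b) = 2}) = 6"
    unfolding dec using f2u f2u' f2r by simp
  show "(\<Sum>a\<in>X. card {b\<in>W-X. clsV (nb X a b) = 0}) = 4"
    unfolding dec using f0u f0r cR by simp
qed




definition cntV :: "vec set \<Rightarrow> nat \<Rightarrow> nat" where
  "cntV X c = card {q \<in> X \<times> (W - X). clsV (nb X (fst q) (snd q)) = c}"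

definition tab :: "nat \<Rightarrow> nat \<Rightarrow> nat" where
  "tab k c = (if k = 0 then (if c = 1 then 60 else 0)
     else if k = 1 then (if c = 0 then 4 else if c = 1 then 50 else if c = 2 then 6 else 0)
     else (if c = 1 then 48 else if c = 2 then 12 else 0))"

lemma cnt_sum: "finite X \<Longrightarrow> cntV X c = (\<Sum>a\<in>X. card {b\<in>W-X. clsV (nb X a b) = c})"
proof -
  assume fX: "finite X"
  have "{q \<in> X \<times> (W - X). clsV (nb X (fst q) (snd q)) = c} = Sigma X (\<lambda>a. {b\<in>W-X. clsV (nb X a b) = c})"
    by auto
  then show ?thesis unfolding cntV_def using fX finite_W by (simp add: card_SigmaI)
qed

lemma card_pairs: "X \<subseteq> W \<Longrightarrow> card X = 6 \<Longrightarrow> card (X \<times> (W - X)) = 60"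
proof -
  assume X: "X \<subseteq> W" "card X = 6"
  have "card (W - X) = 10" using card_Diff_subset[OF finite_subset[OF X(1) finite_W] X(1)] card_W X(2) by simp
  then show ?thesis using X(2) by (simp add: card_cartesian_product)
qed

lemma cnt_total:
  assumes X: "X \<subseteq> W" "card X = 6"
  shows "cntV X 0 + cntV X 1 + cntV X 2 = 60"
proof -
  let ?A = "X \<times> (W - X)"
  let ?f = "\<lambda>q. clsV (nb X (fst q) (snd q))"
  have fA: "finite ?A" using finite_subset[OF X(1) finite_W] finite_W by simp
  define A0 where "A0 = {q\<in>?A. ?f q = 0}"
  define A1 where "A1 = {q\<in>?A. ?f q = 1}"
  define A2 where "A2 = {q\<in>?A. ?f q = 2}"
  have eq: "?A = (A0 \<union> A1) \<union> A2" unfolding A0_def A1_def A2_def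
    using clsV_le by (auto simp: le_Suc_eq numeral_2_eq_2)
  have f: "finite A0" "finite A1" "finite A2" unfolding A0_def A1_def A2_def using fA by simp_all
  have "card ?A = card ((A0 \<union> A1) \<union> A2)" using eq by simp
  also have "\<dots> = card (A0 \<union> A1) + card A2"
    by (rule card_Un_disjoint) (use f in \<open>auto simp: A0_def A1_def A2_def\<close>)
  also have "card (A0 \<union> A1) = card A0 + card A1"
    by (rule card_Un_disjoint) (use f in \<open>auto simp: A0_def A1_def\<close>)
  finally have "card ?A = card A0 + card A1 + card A2" .
  then show ?thesis using card_pairs[OF X] unfolding cntV_def A0_def A1_def A2_def by simp
qed

lemma V0:
  assumes X: "X \<subseteq> W" "card X = 6" and S0: "\<Sum>X = 0" and a: "a \<in> X" and b: "b \<in> W - X"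
  shows "clsV (nb X a b) = 1"
proof -
  have fX: "finite X" using X(2) by (simp add: card_ge_0_finite)
  have bX: "b \<notin> X" using b by simp
  have s: "\<Sum>(nb X a b) = a + b" using sum_nb[OF fX a bX] S0 by simp
  have ab: "a \<noteq> b" using a bX by auto
  have nz: "\<not> Z (a + b)" using ab by (simp add: vsimp)
  have "b \<in> nb X a b" "b + (a + b) \<notin> nb X a b" using ab unfolding nb_def by (auto simp: add_ac)
  then have "\<not> closedt (nb X a b) (a + b)" unfolding closedt_def by blast
  then show ?thesis unfolding clsV_def s using nz by (simp add: Z_def)
qed

lemma table:
  assumes X: "X \<subseteq> W" "card X = 6"
  shows "cntV X c = tab (clsV X) c"
proof -
  have fX: "finite X" using X(2) by (simp add: card_ge_0_finite)
  have tot: "cntV X 0 + cntV X 1 + cntV X 2 = 60" by (rule cnt_total[OF X])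
  have big: "cntV X c = 0" if "c > 2" for c
  proof -
    have "clsV Y \<noteq> c" for Y using clsV_le[of Y] that by linarith
    then have "{q \<in> X \<times> (W - X). clsV (nb X (fst q) (snd q)) = c} = {}" by simp
    then show ?thesis unfolding cntV_def by (metis card.empty)
  qed
  show ?thesis
  proof (cases "\<Sum>X = 0")
    case True
    have all1: "\<forall>q\<in>X \<times> (W - X). clsV (nb X (fst q) (snd q)) = 1" using V0[OF X True] by (auto simp: mem_Times_iff)
    then have "{q \<in> X \<times> (W - X). clsV (nb X (fst q) (snd q)) = 0} = {}"
      "{q \<in> X \<times> (W - X). clsV (nb X (fst q) (snd q)) = 2} = {}" by auto
    then have c0: "cntV X 0 = 0" "cntV X 2 = 0" unfolding cntV_def by (metis card.empty)+
    have c1: "cntV X 1 = 60" using tot c0 by simp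
    have "clsV X = 0" using True by (simp add: clsV_def)
    then show ?thesis using c0 c1 big[of c] by (cases "c = 0"; cases "c = 1"; cases "c = 2") (auto simp: tab_def)
  next
    case False
    show ?thesis
    proof (cases "closedt X (\<Sum>X)")
      case True
      have c2: "cntV X 2 = 12" unfolding cnt_sum[OF fX] using V2cnt(1)[OF X False True] X(2) by simp
      have c0: "cntV X 0 = 0" unfolding cnt_sum[OF fX] using V2cnt(2)[OF X False True] by simp
      have c1: "cntV X 1 = 48" using tot c0 c2 by simp
      have "clsV X = 2" using False True by (simp add: clsV_def)
      then show ?thesis using c0 c1 c2 big[of c] by (cases "c = 0"; cases "c = 1"; cases "c = 2") (auto simp: tab_def)
    next
      case ncl: False
      have c2: "cntV X 2 = 6" unfolding cnt_sum[OF fX] using V1cnt(1)[OF X False ncl] by simp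
      have c0: "cntV X 0 = 4" unfolding cnt_sum[OF fX] using V1cnt(2)[OF X False ncl] by simp
      have c1: "cntV X 1 = 50" using tot c0 c2 by simp
      have "clsV X = 1" using False ncl by (simp add: clsV_def)
      then show ?thesis using c0 c1 c2 big[of c] by (cases "c = 0"; cases "c = 1"; cases "c = 2") (auto simp: tab_def)
    qed
  qed
qed




lemma vv_nb:
  assumes x: "x \<subseteq> {1..16}" and a: "a \<in> x" and b: "b \<in> {1..16}"
  shows "vv ` nb x a b = nb (vv ` x) (vv a) (vv b)"
proof -
  have "vv ` (x - {a}) = vv ` x - vv ` {a}"
    by (rule inj_on_image_set_diff[OF vv_inj]) (use x a in auto)
  then show ?thesis unfolding nb_def by simp
qed

lemma N_eq:
  assumes x: "x \<subseteq> {1..16}" "card x = 6"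
  shows "card {y \<in> johnson_vertices 16 6. johnson_adj 16 6 x y \<and> clsV (vv ` y) = c} = cntV (vv ` x) c"
proof -
  let ?P = "{1..16::nat}"
  let ?F = "map_prod vv vv"
  let ?A = "{p \<in> x \<times> (?P - x). clsV (vv ` nb x (fst p) (snd p)) = c}"
  let ?B = "{q \<in> vv ` x \<times> (W - vv ` x). clsV (nb (vv ` x) (fst q) (snd q)) = c}"
  have inj: "inj_on ?F (?P \<times> ?P)" using map_prod_inj_on[OF vv_inj vv_inj] .
  have img: "?F ` ?A = ?B"
  proof (intro equalityI subsetI)
    fix q assume "q \<in> ?F ` ?A"
    then obtain a b where ab: "a \<in> x" "b \<in> ?P" "b \<notin> x" and c: "clsV (vv ` nb x a b) = c" and q: "q = (vv a, vv b)"
      by auto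
    have "vv b \<notin> vv ` x" using inj_on_image_mem_iff[OF vv_inj ab(2) x(1)] ab(3) by simp
    moreover have "vv b \<in> W" by (rule vv_W)
    moreover have "clsV (nb (vv ` x) (vv a) (vv b)) = c" using c vv_nb[OF x(1) ab(1) ab(2)] by simp
    ultimately show "q \<in> ?B" using q ab by auto
  next
    fix q assume q: "q \<in> ?B"
    then obtain al be where qe: "q = (al, be)" and al: "al \<in> vv ` x" and be: "be \<in> W" "be \<notin> vv ` x"
      and c: "clsV (nb (vv ` x) al be) = c" by auto
    obtain a where a: "a \<in> x" "al = vv a" using al by blast
    obtain b where b: "b \<in> ?P" "be = vv b" using be(1) vv_image by blast
    have bx: "b \<notin> x" using b be(2) by blast
    have "clsV (vv ` nb x a b) = c" using c vv_nb[OF x(1) a(1) b(1)] a b by simp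
    then have "(a, b) \<in> ?A" using a b bx by simp
    moreover have "q = ?F (a, b)" using qe a b by simp
    ultimately show "q \<in> ?F ` ?A" by blast
  qed
  have "card ?A = card ?B"
  proof -
    have "?A \<subseteq> ?P \<times> ?P" using x(1) by auto
    then have "card (?F ` ?A) = card ?A" using card_image[OF inj_on_subset[OF inj]] by blast
    then show ?thesis using img by simp
  qed
  then show ?thesis unfolding card_nbrs[OF x, of "\<lambda>y. clsV (vv ` y) = c"] cntV_def by simp
qed




abbreviation "VJ \<equiv> johnson_vertices 16 6"
abbreviation "EJ \<equiv> johnson_adj 16 6"
definition cl :: "nat set \<Rightarrow> nat" where "cl x = clsV (vv ` x)"

lemma F1: "x \<in> VJ \<Longrightarrow> vv ` x \<subseteq> W \<and> card (vv ` x) = 6"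
proof -
  assume "x \<in> VJ"
  then have x: "x \<subseteq> {1..16}" "card x = 6" by (auto simp: jv)
  have "inj_on vv x" using inj_on_subset[OF vv_inj x(1)] .
  then show ?thesis using x vv_W card_image[OF \<open>inj_on vv x\<close>] by auto
qed

lemma F2: "x \<in> VJ \<Longrightarrow> card {y\<in>VJ. EJ x y \<and> cl y = c} = tab (cl x) c"
proof -
  assume xV: "x \<in> VJ"
  then have x: "x \<subseteq> {1..16}" "card x = 6" by (auto simp: jv)
  show ?thesis unfolding cl_def N_eq[OF x] using table F1[OF xV] by simp
qed

lemma F3: "x \<in> weight6_supports \<longleftrightarrow> x \<in> VJ \<and> cl x = 0"
proof -
  have "sig x = \<Sum>(vv ` x)" if "x \<subseteq> {1..16}" for x
    unfolding sig_def using sum.reindex[OF inj_on_subset[OF vv_inj that], of id] by simp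
  then show ?thesis unfolding weight6_iff jv cl_def clsV0 Z_def by auto
qed

lemma F4: "cl x \<le> 2" unfolding cl_def by (rule clsV_le)

lemma F5: "EJ x y \<Longrightarrow> x \<in> VJ \<and> y \<in> VJ" by (simp add: johnson_adj_def)

lemma F6: "finite VJ"
proof -
  have "VJ \<subseteq> Pow {1..16}" by (auto simp: jv)
  then show ?thesis using finite_subset by blast
qed

lemma F7: assumes "x \<in> VJ" "tab (cl x) c > 0" shows "\<exists>y. EJ x y \<and> cl y = c"
proof -
  have "card {y\<in>VJ. EJ x y \<and> cl y = c} > 0" using F2[OF assms(1)] assms(2) by simp
  then have "{y\<in>VJ. EJ x y \<and> cl y = c} \<noteq> {}" by (metis card.empty less_irrefl)
  then show ?thesis by blast
qed

lemma F8: assumes "x \<in> VJ" "tab (cl x) c = 0" shows "\<not> (\<exists>y. EJ x y \<and> cl y = c)"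
proof -
  have "card {y\<in>VJ. EJ x y \<and> cl y = c} = 0" using F2[OF assms(1)] assms(2) by simp
  moreover have "finite {y\<in>VJ. EJ x y \<and> cl y = c}" using F6 by simp
  ultimately have "{y\<in>VJ. EJ x y \<and> cl y = c} = {}" by simp
  then show ?thesis using F5 by blast
qed

lemma walk1: "walk E (Suc 0) x c \<longleftrightarrow> E x c" by simp

lemma set_dist_cl: assumes xV: "x \<in> VJ" shows "set_dist EJ weight6_supports x = cl x"
proof -
  let ?P = "\<lambda>n. \<exists>c\<in>weight6_supports. walk EJ n x c"
  have nP0: "\<not> ?P 0" if "cl x \<noteq> 0" using that F3 by auto
  have le2: "cl x \<le> 2" by (rule F4)
  show ?thesis unfolding set_dist_def
  proof (cases "cl x = 0")
    case True
    then have "?P 0" using F3 xV by auto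
    then show "(LEAST n. ?P n) = cl x" using True by simp
  next
    case False
    show "(LEAST n. ?P n) = cl x"
    proof (cases "cl x = 1")
      case True
      then obtain y where y: "EJ x y" "cl y = 0" using F7[OF xV, of 0] by (auto simp: tab_def)
      have "y \<in> weight6_supports" using y F3 F5 by blast
      then have "?P 1" using y by auto
      have "1 \<le> m" if "?P m" for m
      proof (rule ccontr)
        assume "\<not> 1 \<le> m" then have "m = 0" by auto
        then show False using that nP0[OF False] by auto
      qed
      then show ?thesis using True \<open>?P 1\<close> by (intro Least_equality) auto
    next
      case False2: False
      then have c2: "cl x = 2" using False le2 by linarith
      obtain y where y: "EJ x y" "cl y = 1" using F7[OF xV, of 1] c2 by (auto simp: tab_def)
      have yV: "y \<in> VJ" using F5 y by blast
      obtain z where z: "EJ y z" "cl z = 0" using F7[OF yV, of 0] y by (auto simp: tab_def)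
      have "z \<in> weight6_supports" using z F3 F5 by blast
      then have P2: "?P 2" using y z by (auto simp: numeral_2_eq_2)
      have nE: "\<not> (\<exists>y. EJ x y \<and> cl y = 0)" using F8[OF xV, of 0] c2 by (simp add: tab_def)
      have nP1: "\<not> ?P 1" using nE F3 by auto
      have "2 \<le> m" if "?P m" for m
      proof (rule ccontr)
        assume "\<not> 2 \<le> m" then have "m = 0 \<or> m = 1" by auto
        then show False using that nP0[OF False] nP1 by auto
      qed
      then show ?thesis using P2 c2 by (intro Least_equality) auto
    qed
  qed
qed


lemma x0V: "{1..6::nat} \<in> VJ" by (auto simp: jv)

lemma ex_cl0: "\<exists>x\<in>VJ. cl x = 0"
proof -
  have "cl {1..6} \<le> 2" by (rule F4)
  then consider "cl {1..6} = 0" | "cl {1..6} = 1" | "cl {1..6} = 2" by linarith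
  then show ?thesis
  proof cases
    case 1 then show ?thesis using x0V by blast
  next
    case 2
    then obtain y where "EJ {1..6} y" "cl y = 0" using F7[OF x0V, of 0] by (auto simp: tab_def)
    then show ?thesis using F5 by blast
  next
    case 3
    then obtain y where y: "EJ {1..6} y" "cl y = 1" using F7[OF x0V, of 1] by (auto simp: tab_def)
    then have yV: "y \<in> VJ" using F5 by blast
    obtain z where "EJ y z" "cl z = 0" using F7[OF yV, of 0] y by (auto simp: tab_def)
    then show ?thesis using F5 by blast
  qed
qed

lemma ex_cl2: "\<exists>x\<in>VJ. cl x = 2"
proof -
  obtain x where x: "x \<in> VJ" "cl x = 0" using ex_cl0 by blast
  obtain y where y: "EJ x y" "cl y = 1" using F7[OF x(1), of 1] x by (auto simp: tab_def)
  then have yV: "y \<in> VJ" using F5 by blast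
  obtain z where "EJ y z" "cl z = 2" using F7[OF yV, of 2] y by (auto simp: tab_def)
  then show ?thesis using F5 by blast
qed

theorem corollary5p2:
  shows "completely_regular (johnson_vertices 16 6) (johnson_adj 16 6) weight6_supports \<and>
         covering_radius (johnson_vertices 16 6) (johnson_adj 16 6) weight6_supports = 2"
proof
  let ?C = weight6_supports
  have sd: "set_dist EJ ?C y = cl y" if "y \<in> VJ" for y using set_dist_cl[OF that] .
  have layer: "x \<in> dist_layer VJ EJ ?C i \<longleftrightarrow> x \<in> VJ \<and> cl x = i" for x i
    unfolding dist_layer_def using sd by auto
  show "completely_regular VJ EJ ?C"
    unfolding completely_regular_def
  proof (intro conjI)
    show "?C \<noteq> {}" using ex_cl0 F3 by blast
    show "?C \<subseteq> VJ" using F3 by blast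
    let ?g = "\<lambda>i. case i of 0 \<Rightarrow> 0 | Suc k \<Rightarrow> tab i k"
    let ?a = "\<lambda>i. tab i i"
    let ?b = "\<lambda>i. tab i (Suc i)"
    have H: "\<forall>i. \<forall>x\<in>dist_layer VJ EJ ?C i.
        card {y \<in> VJ. EJ x y \<and> Suc (set_dist EJ ?C y) = i} = ?g i \<and>
        card {y \<in> VJ. EJ x y \<and> set_dist EJ ?C y = i} = ?a i \<and>
        card {y \<in> VJ. EJ x y \<and> set_dist EJ ?C y = Suc i} = ?b i"
    proof (intro allI ballI conjI)
      fix i x assume "x \<in> dist_layer VJ EJ ?C i"
      then have xV: "x \<in> VJ" and cx: "cl x = i" using layer by auto
      have e: "{y \<in> VJ. EJ x y \<and> P (set_dist EJ ?C y)} = {y \<in> VJ. EJ x y \<and> P (cl y)}" for P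
        using sd by auto
      show "card {y \<in> VJ. EJ x y \<and> set_dist EJ ?C y = i} = ?a i"
        using e[of "\<lambda>n. n = i"] F2[OF xV, of i] cx by simp
      show "card {y \<in> VJ. EJ x y \<and> set_dist EJ ?C y = Suc i} = ?b i"
        using e[of "\<lambda>n. n = Suc i"] F2[OF xV, of "Suc i"] cx by simp
      show "card {y \<in> VJ. EJ x y \<and> Suc (set_dist EJ ?C y) = i} = ?g i"
      proof (cases i)
        case 0
        then show ?thesis by simp
      next
        case (Suc k)
        have "{y \<in> VJ. EJ x y \<and> Suc (cl y) = i} = {y \<in> VJ. EJ x y \<and> cl y = k}" using Suc by auto
        then show ?thesis using e[of "\<lambda>n. Suc n = i"] F2[OF xV, of k] cx Suc by simp
      qed
    qed
    show "\<exists>\<gamma> \<alpha> \<beta> :: nat \<Rightarrow> nat. \<forall>i. \<forall>x\<in>dist_layer VJ EJ ?C i.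
        card {y \<in> VJ. EJ x y \<and> Suc (set_dist EJ ?C y) = i} = \<gamma> i \<and>
        card {y \<in> VJ. EJ x y \<and> set_dist EJ ?C y = i} = \<alpha> i \<and>
        card {y \<in> VJ. EJ x y \<and> set_dist EJ ?C y = Suc i} = \<beta> i"
      by (rule exI[of _ ?g], rule exI[of _ ?a], rule exI[of _ ?b], rule H)
  qed
  show "covering_radius VJ EJ ?C = 2"
    unfolding covering_radius_def
  proof (rule Greatest_equality)
    show "dist_layer VJ EJ ?C 2 \<noteq> {}" using ex_cl2 layer by blast
    fix i assume "dist_layer VJ EJ ?C i \<noteq> {}"
    then obtain x where "x \<in> VJ" "cl x = i" using layer by blast
    then show "i \<le> 2" using F4 by blast
  qed
qed


end
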